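(* Let $q>0$. The set $L(q)$ contains a loop of length $1$ if and only if $q=1/b$ for some positive integer $b$. In that case the weight $w_q$ is not unique unless $q=1$.
   Context: For $q>0$, $k\ge0$ and $\mathbf m=(m_0,\dots,m_k)\in\mathbb Z^{k+1}$ put $\mathbf m_j=(m_0,\dots,m_j)$; define $c(q,\mathbf m_0)=m_0$ and $c(q,\mathbf m_j)=m_j+\frac{1}{q\,c(q,\mathbf m_{j-1})}$ for $1\le j\le k$. $\mathbf m$ is a path for $q$ of length $k$ if $c(q,\mathbf m_j)\ne0$ for $0\le j\le k-1$. The weight is $w_q(\mathbf m)=q^{k/2}\prod_{j=0}^{k-1}|c(q,\mathbf m_j)|$ (and $1$ if $k=0$). A loop is a path with $c(q,\mathbf m)=0$; $L(q)$ is the set of loops for $q$. The weight $w_q$ is unique if $w_q(\mathbf m)=w_q(\mathbf n)$ for all paths $\mathbf m,\mathbf n$ for $q$ with $c(q,\mathbf m)=c(q,\mathbf n)$. *)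

theory Defs
  imports Complex_Main
begin

text \<open>A vector m = (m_0,...,m_k) is represented as a nonempty list of integers
  of length k+1. cval q m j is c(q, m_j), the value on the prefix (m_0,...,m_j).\<close>

fun cval :: "real \<Rightarrow> int list \<Rightarrow> nat \<Rightarrow> real" where
  "cval q m 0 = of_int (m ! 0)"
| "cval q m (Suc j) = of_int (m ! Suc j) + 1 / (q * cval q m j)"

definition plen :: "int list \<Rightarrow> nat" where
  "plen m = length m - 1"

definition cfull :: "real \<Rightarrow> int list \<Rightarrow> real" where
  "cfull q m = cval q m (plen m)"

definition is_path :: "real \<Rightarrow> int list \<Rightarrow> bool" where
  "is_path q m \<longleftrightarrow> m \<noteq> [] \<and> (\<forall>j < plen m. cval q m j \<noteq> 0)"

definition weight :: "real \<Rightarrow> int list \<Rightarrow> real" where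
  "weight q m = q powr (real (plen m) / 2) * (\<Prod>j<plen m. \<bar>cval q m j\<bar>)"

definition loops :: "real \<Rightarrow> int list set" where
  "loops q = {m. is_path q m \<and> cfull q m = 0}"

definition weight_unique :: "real \<Rightarrow> bool" where
  "weight_unique q \<longleftrightarrow>
     (\<forall>m n. is_path q m \<and> is_path q n \<and> cfull q m = cfull q n \<longrightarrow> weight q m = weight q n)"

end

theory Submission
  imports Defs
begin

lemma len2: "plen m = 1 \<Longrightarrow> \<exists>a c. m = [a, c]"
  unfolding plen_def
  by (cases m; cases "tl m"; auto simp: length_Suc_conv)

lemma aux: "(q::real) * x = 1 \<Longrightarrow> q = 1 / x"
proof -
  assume h: "q * x = 1"
  hence "x \<noteq> 0" by auto
  thus ?thesis using h by (simp add: field_simps)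
qed

lemma fwd:
  assumes q: "q > 0" and m: "m \<in> loops q" "plen m = 1"
  shows "\<exists>b::nat. b > 0 \<and> q = 1 / real b"
proof -
  obtain a c where mc: "m = [a, c]" using len2 m(2) by blast
  have a0: "a \<noteq> 0" using m unfolding loops_def is_path_def mc by auto
  have eq: "of_int c + 1 / (q * of_int a) = 0"
    using m unfolding loops_def cfull_def mc plen_def by (simp add: numeral_2_eq_2)
  have qa: "q * of_int a \<noteq> 0" using q a0 by simp
  have eq2: "of_int c * (q * of_int a) = -1"
    using eq qa by (simp add: field_simps)
  hence eq3: "q * real_of_int (- (a * c)) = 1" by (simp add: algebra_simps)
  have pos: "- (a * c) > 0"
  proof (rule ccontr)
    assume "\<not> - (a * c) > 0"
    hence "- (a * c) \<le> 0" by simp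
    hence "real_of_int (- (a * c)) \<le> real_of_int 0" by (rule of_int_le_iff[THEN iffD2])
    hence "real_of_int (- (a * c)) \<le> 0" by (simp only: of_int_0)
    hence "q * real_of_int (- (a * c)) \<le> 0" using q by (simp add: mult_nonneg_nonpos)
    thus False using eq3 by simp
  qed
  show ?thesis
  proof (intro exI conjI)
    show "nat (- (a * c)) > 0" using pos by simp
    have r: "real (nat (- (a * c))) = real_of_int (- (a * c))" using pos by simp
    have "q * real (nat (- (a * c))) = 1" using eq3 unfolding r .
    thus "q = 1 / real (nat (- (a * c)))" by (rule aux)
  qed
qed

theorem corollary4:
  fixes q :: real
  assumes "q > 0"
  shows "((\<exists>m \<in> loops q. plen m = 1) \<longleftrightarrow> (\<exists>b::nat. b > 0 \<and> q = 1 / real b))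
         \<and> ((\<exists>b::nat. b > 0 \<and> q = 1 / real b) \<and> q \<noteq> 1 \<longrightarrow> \<not> weight_unique q)"
proof -
  have L1: "[1, - int b] \<in> loops q" "[int b, -1] \<in> loops q"
    if "b > 0" "q = 1 / real b" for b :: nat
    using that unfolding loops_def is_path_def cfull_def plen_def
    by (auto simp: numeral_2_eq_2)
  have P: "plen [1, - int b] = 1" "plen [int b, -1] = 1" for b
    by (auto simp: plen_def)
  show ?thesis
  proof (intro conjI impI)
    show "(\<exists>m \<in> loops q. plen m = 1) \<longleftrightarrow> (\<exists>b::nat. b > 0 \<and> q = 1 / real b)"
      using fwd[OF assms] L1 P by blast
  next
    assume h: "(\<exists>b::nat. b > 0 \<and> q = 1 / real b) \<and> q \<noteq> 1"
    then obtain b :: nat where b: "b > 0" "q = 1 / real b" by blast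
    have b1: "b \<noteq> 1" using h b by auto
    have w1: "weight q [1, - int b] = q powr (1/2)"
      by (simp add: weight_def plen_def)
    have w2: "weight q [int b, -1] = q powr (1/2) * real b"
      by (simp add: weight_def plen_def)
    have "q powr (1/2) > 0" using assms by simp
    hence ne: "weight q [1, - int b] \<noteq> weight q [int b, -1]"
      using w1 w2 b1 by simp
    have l1: "is_path q [1, - int b]" "cfull q [1, - int b] = 0"
      using L1(1)[OF b] unfolding loops_def by auto
    have l2: "is_path q [int b, -1]" "cfull q [int b, -1] = 0"
      using L1(2)[OF b] unfolding loops_def by auto
    show "\<not> weight_unique q"
    proof
      assume "weight_unique q"
      hence "weight q [1, - int b] = weight q [int b, -1]"
        unfolding weight_unique_def using l1 l2 by metis
      thus False using ne by contradiction
    qed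
  qed
qed

end
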